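(* For a dcpo $P$ the following are equivalent: (1) $\Sigma P$ is a $d^{\ast}$-space; (2) for every $x\in P$ and every Scott closed set $C\neq P$, the set ${\downarrow}({\uparrow}x\cap C)$ is Scott closed; (3) for every $K\in K(\Sigma P)$ and every Scott closed set $C\neq P$, the set ${\downarrow}(K\cap C)$ is Scott closed; (4) $\Sigma P$ is $S^{\ast}$-well-filtered.
   Context: A dcpo is a poset in which every directed subset has a supremum. $\Sigma P$ is $P$ with the Scott topology (a set $U$ is Scott open if $U={\uparrow}U$ and every directed $D$ with $\bigvee D\in U$ meets $U$; Scott closed sets are the complements); its specialization order is the order of $P$. For a space $X$, ${\uparrow},{\downarrow}$ are taken in the specialization order ($x\le y$ iff $x\in cl\{y\}$); $K(X)$ is the set of nonempty compact saturated (= upper) subsets; a family in $K(X)$ is filtered if any two members contain a common member. $X$ is a $d^{\ast}$-space if for every directed $D\subseteq X$, every $x\in X$ and every nonempty open $U$, $\bigcap_{d\in D}{\uparrow}d\cap{\uparrow}x\subseteq U$ implies ${\uparrow}d\cap{\uparrow}x\subseteq U$ for some $d\in D$. $X$ is $S^{\ast}$-well-filtered if for every filtered family $\{K_i\mid i\in I\}\subseteq K(X)$, every $G\in K(X)$ and every nonempty open $U$, $\bigcap_{i}K_i\cap G\subseteq U$ implies $K_i\cap G\subseteq U$ for some $i$. *)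

theory Defs
  imports "HOL-Analysis.Analysis"
begin

definition directed :: "'a::order set \<Rightarrow> bool" where
  "directed D \<longleftrightarrow> D \<noteq> {} \<and> (\<forall>a\<in>D. \<forall>b\<in>D. \<exists>c\<in>D. a \<le> c \<and> b \<le> c)"

definition is_sup :: "'a::order set \<Rightarrow> 'a \<Rightarrow> bool" where
  "is_sup D s \<longleftrightarrow> (\<forall>d\<in>D. d \<le> s) \<and> (\<forall>u. (\<forall>d\<in>D. d \<le> u) \<longrightarrow> s \<le> u)"

definition dcpo :: "'a::order itself \<Rightarrow> bool" where
  "dcpo _ \<longleftrightarrow> (\<forall>D::'a set. directed D \<longrightarrow> (\<exists>s. is_sup D s))"

definition upper :: "'a::order set \<Rightarrow> 'a set" where
  "upper A = {y. \<exists>a\<in>A. a \<le> y}"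

definition lower :: "'a::order set \<Rightarrow> 'a set" where
  "lower A = {y. \<exists>a\<in>A. y \<le> a}"

definition scott_open :: "'a::order set \<Rightarrow> bool" where
  "scott_open U \<longleftrightarrow> upper U = U \<and>
     (\<forall>D s. directed D \<and> is_sup D s \<and> s \<in> U \<longrightarrow> D \<inter> U \<noteq> {})"

lemma istopology_scott_open: "istopology (scott_open :: 'a::order set \<Rightarrow> bool)"
  unfolding istopology_def
proof (intro conjI allI impI)
  fix S T :: "'a set" assume S: "scott_open S" and T: "scott_open T"
  show "scott_open (S \<inter> T)"
    unfolding scott_open_def
  proof (intro conjI allI impI)
    show "upper (S \<inter> T) = S \<inter> T"
      using S T unfolding scott_open_def upper_def by auto
  next
    fix D s assume H: "directed D \<and> is_sup D s \<and> s \<in> S \<inter> T"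
    then obtain a b where a: "a \<in> D \<inter> S" and b: "b \<in> D \<inter> T"
      using S T unfolding scott_open_def by blast
    then obtain c where c: "c \<in> D" "a \<le> c" "b \<le> c"
      using H unfolding directed_def by blast
    have "c \<in> S" using S a c unfolding scott_open_def upper_def by blast
    moreover have "c \<in> T" using T b c unfolding scott_open_def upper_def by blast
    ultimately show "D \<inter> (S \<inter> T) \<noteq> {}" using c by blast
  qed
next
  fix K :: "'a set set" assume K: "\<forall>S\<in>K. scott_open S"
  show "scott_open (\<Union>K)"
    unfolding scott_open_def
  proof (intro conjI allI impI)
    show "upper (\<Union>K) = \<Union>K"
      using K unfolding scott_open_def upper_def by blast
  next
    fix D s assume "directed D \<and> is_sup D s \<and> s \<in> \<Union>K"
    then show "D \<inter> \<Union>K \<noteq> {}" using K unfolding scott_open_def by blast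
  qed
qed

definition scott_topology :: "'a::order topology" where
  "scott_topology = topology scott_open"

lemma openin_scott_topology: "openin (scott_topology :: 'a::order topology) U \<longleftrightarrow> scott_open U"
  unfolding scott_topology_def
  by (metis topology_inverse' istopology_scott_open)

definition spec_le :: "'a topology \<Rightarrow> 'a \<Rightarrow> 'a \<Rightarrow> bool" where
  "spec_le X x y \<longleftrightarrow> x \<in> topspace X \<and> y \<in> topspace X \<and> x \<in> X closure_of {y}"

definition sup_X :: "'a topology \<Rightarrow> 'a set \<Rightarrow> 'a set" where
  "sup_X X A = {y \<in> topspace X. \<exists>a\<in>A. spec_le X a y}"

definition directed_in :: "'a topology \<Rightarrow> 'a set \<Rightarrow> bool" where
  "directed_in X D \<longleftrightarrow> D \<subseteq> topspace X \<and> D \<noteq> {} \<and>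
     (\<forall>a\<in>D. \<forall>b\<in>D. \<exists>c\<in>D. spec_le X a c \<and> spec_le X b c)"

text \<open>K(X): nonempty compact saturated (= upper) subsets.\<close>
definition KX :: "'a topology \<Rightarrow> 'a set set" where
  "KX X = {K. K \<noteq> {} \<and> K \<subseteq> topspace X \<and> compactin X K \<and> sup_X X K = K}"

definition d_star_space :: "'a topology \<Rightarrow> bool" where
  "d_star_space X \<longleftrightarrow>
     (\<forall>D x U. directed_in X D \<and> x \<in> topspace X \<and> openin X U \<and> U \<noteq> {} \<and>
        (\<Inter>d\<in>D. sup_X X {d}) \<inter> sup_X X {x} \<subseteq> U
        \<longrightarrow> (\<exists>d\<in>D. sup_X X {d} \<inter> sup_X X {x} \<subseteq> U))"

definition filtered_family :: "'a set set \<Rightarrow> bool" where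
  "filtered_family \<K> \<longleftrightarrow> \<K> \<noteq> {} \<and>
     (\<forall>K1\<in>\<K>. \<forall>K2\<in>\<K>. \<exists>K3\<in>\<K>. K3 \<subseteq> K1 \<and> K3 \<subseteq> K2)"

definition S_star_well_filtered :: "'a topology \<Rightarrow> bool" where
  "S_star_well_filtered X \<longleftrightarrow>
     (\<forall>\<K> G U. \<K> \<subseteq> KX X \<and> filtered_family \<K> \<and> G \<in> KX X \<and> openin X U \<and> U \<noteq> {} \<and>
        \<Inter>\<K> \<inter> G \<subseteq> U \<longrightarrow> (\<exists>K\<in>\<K>. K \<inter> G \<subseteq> U))"

end

theory Submission
  imports Defs
begin

lemma topspace_scott[simp]: "topspace (scott_topology :: 'a::order topology) = UNIV"
proof -
  have "scott_open (UNIV :: 'a set)" unfolding scott_open_def upper_def directed_def by auto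
  then have "openin (scott_topology :: 'a topology) UNIV" by (simp add: openin_scott_topology)
  then show ?thesis using openin_subset by blast
qed

lemma closedin_scott:
  "closedin (scott_topology :: 'a::order topology) C \<longleftrightarrow>
     (\<forall>x y. x \<in> C \<and> y \<le> x \<longrightarrow> y \<in> C) \<and> (\<forall>D s. directed D \<and> D \<subseteq> C \<and> is_sup D s \<longrightarrow> s \<in> C)"
proof -
  have "closedin (scott_topology :: 'a::order topology) C \<longleftrightarrow> scott_open (- C)"
    by (simp add: closedin_def openin_scott_topology Compl_eq_Diff_UNIV)
  also have "\<dots> \<longleftrightarrow> (\<forall>x y. x \<in> C \<and> y \<le> x \<longrightarrow> y \<in> C) \<and> (\<forall>D s. directed D \<and> D \<subseteq> C \<and> is_sup D s \<longrightarrow> s \<in> C)"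
    unfolding scott_open_def upper_def by (auto; blast)
  finally show ?thesis .
qed

lemma openin_scott_compl: "openin (scott_topology :: 'a::order topology) U \<longleftrightarrow> closedin scott_topology (- U)"
  by (simp add: closedin_def Compl_eq_Diff_UNIV double_diff)

lemma spec_le_scott: "spec_le (scott_topology :: 'a::order topology) x y \<longleftrightarrow> x \<le> y"
proof
  assume "spec_le scott_topology x y"
  then have H: "\<forall>T. x \<in> T \<and> openin (scott_topology :: 'a topology) T \<longrightarrow> y \<in> T"
    unfolding spec_le_def closure_of_def by auto
  have "closedin (scott_topology :: 'a topology) (lower {y})"
    unfolding closedin_scott lower_def is_sup_def by (auto intro: order_trans)
  then have "openin (scott_topology :: 'a topology) (- lower {y})"
    by (simp add: openin_scott_compl)
  moreover have "y \<notin> - lower {y}" unfolding lower_def by auto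
  ultimately have "x \<notin> - lower {y}" using H by blast
  then show "x \<le> y" unfolding lower_def by auto
next
  assume "x \<le> y"
  then show "spec_le scott_topology x y"
    unfolding spec_le_def closure_of_def
    by (auto simp: openin_scott_topology scott_open_def upper_def)
qed

lemma sup_X_scott[simp]: "sup_X (scott_topology :: 'a::order topology) A = upper A"
  unfolding sup_X_def upper_def spec_le_scott by auto

lemma directed_in_scott[simp]: "directed_in (scott_topology :: 'a::order topology) D \<longleftrightarrow> directed D"
  unfolding directed_in_def directed_def spec_le_scott by auto

lemma KX_upper: "K \<in> KX (scott_topology :: 'a::order topology) \<Longrightarrow> x \<in> K \<Longrightarrow> x \<le> y \<Longrightarrow> y \<in> K"
proof -
  assume "K \<in> KX (scott_topology :: 'a::order topology)" "x \<in> K" "x \<le> y"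
  moreover have "upper K = K" using \<open>K \<in> KX scott_topology\<close> by (simp add: KX_def)
  moreover have "y \<in> upper K" using \<open>x \<in> K\<close> \<open>x \<le> y\<close> by (auto simp: upper_def)
  ultimately show ?thesis by simp
qed

lemma upper_single_KX: "upper {x} \<in> KX (scott_topology :: 'a::order topology)"
proof -
  have "compactin (scott_topology :: 'a topology) (upper {x})"
    unfolding compactin_def
  proof (intro conjI allI impI)
    fix \<U> assume H: "(\<forall>U\<in>\<U>. openin (scott_topology :: 'a topology) U) \<and> upper {x} \<subseteq> \<Union>\<U>"
    then obtain U where U: "U \<in> \<U>" "x \<in> U" unfolding upper_def by auto
    then have "upper U = U" using H by (auto simp: openin_scott_topology scott_open_def)
    then have "upper {x} \<subseteq> U" using U unfolding upper_def by auto
    then show "\<exists>\<F>. finite \<F> \<and> \<F> \<subseteq> \<U> \<and> upper {x} \<subseteq> \<Union>\<F>"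
      using U by (intro exI[of _ "{U}"]) auto
  qed auto
  moreover have "upper (upper {x}) = upper {x}" unfolding upper_def by (auto intro: order_trans)
  moreover have "upper {x} \<noteq> {}" unfolding upper_def by auto
  ultimately show ?thesis unfolding KX_def sup_X_scott by auto
qed

lemma Inter_upper: "is_sup D s \<Longrightarrow> (\<Inter>d\<in>D. upper {d}) = upper {s}"
  unfolding is_sup_def upper_def by (auto intro: order_trans)

lemma directed_finite_ub:
  assumes "directed D" "finite F" "F \<subseteq> D"
  shows "\<exists>u\<in>D. \<forall>f\<in>F. f \<le> u"
  using assms(2,3)
proof (induction F rule: finite_induct)
  case empty
  then show ?case using assms(1) unfolding directed_def by auto
next
  case (insert a F)
  then obtain u where "u \<in> D" "\<forall>f\<in>F. f \<le> u" by auto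
  moreover obtain c where "c \<in> D" "a \<le> c" "u \<le> c"
    using assms(1) insert.prems \<open>u \<in> D\<close> unfolding directed_def by blast
  ultimately show ?case by (metis insert_iff order_trans)
qed


lemma lower_closed_lower: "y \<in> lower A \<Longrightarrow> z \<le> y \<Longrightarrow> z \<in> lower A"
  unfolding lower_def by (auto intro: order_trans)

lemma d_star_scott:
  "d_star_space (scott_topology :: 'a::order topology) \<longleftrightarrow>
    (\<forall>D (x::'a) U. directed D \<and> scott_open U \<and> U \<noteq> {} \<and>
        (\<Inter>d\<in>D. upper {d}) \<inter> upper {x} \<subseteq> U
        \<longrightarrow> (\<exists>d\<in>D. upper {d} \<inter> upper {x} \<subseteq> U))"
  unfolding d_star_space_def by (simp add: openin_scott_topology)

definition P2 :: "'a::order itself \<Rightarrow> bool" where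
  "P2 _ \<longleftrightarrow> (\<forall>(x::'a) C. closedin scott_topology C \<and> C \<noteq> UNIV
                   \<longrightarrow> closedin scott_topology (lower (upper {x} \<inter> C)))"

definition P3 :: "'a::order itself \<Rightarrow> bool" where
  "P3 _ \<longleftrightarrow> (\<forall>K (C::'a set). K \<in> KX scott_topology \<and> closedin scott_topology C \<and> C \<noteq> UNIV
                   \<longrightarrow> closedin scott_topology (lower (K \<inter> C)))"

lemma d_imp_P2:
  assumes dc: "dcpo TYPE('a::order)" and ds: "d_star_space (scott_topology :: 'a topology)"
  shows "P2 TYPE('a)"
  unfolding P2_def
proof (intro allI impI)
  fix x :: 'a and C :: "'a set" assume H: "closedin scott_topology C \<and> C \<noteq> UNIV"
  let ?A = "lower (upper {x} \<inter> C)"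
  show "closedin scott_topology ?A"
    unfolding closedin_scott
  proof (intro conjI allI impI)
    fix a b assume "a \<in> ?A \<and> b \<le> a" then show "b \<in> ?A" using lower_closed_lower by blast
  next
    fix D s assume Ds: "directed D \<and> D \<subseteq> ?A \<and> is_sup D s"
    show "s \<in> ?A"
    proof (rule ccontr)
      assume ns: "s \<notin> ?A"
      have sub: "(\<Inter>d\<in>D. upper {d}) \<inter> upper {x} \<subseteq> - C"
        using ns Ds Inter_upper[of D s] unfolding lower_def upper_def by auto
      have "scott_open (- C)" using H openin_scott_compl[of "- C"] by (simp add: openin_scott_topology)
      moreover have "- C \<noteq> {}" using H by auto
      ultimately obtain d where d: "d \<in> D" "upper {d} \<inter> upper {x} \<subseteq> - C"
        using ds sub Ds unfolding d_star_scott by blast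
      then have "d \<in> ?A" using Ds by auto
      then obtain y where "d \<le> y" "x \<le> y" "y \<in> C" unfolding lower_def upper_def by auto
      then show False using d unfolding upper_def by auto
    qed
  qed
qed

lemma P2_imp_d:
  assumes dc: "dcpo TYPE('a::order)" and p: "P2 TYPE('a)"
  shows "d_star_space (scott_topology :: 'a topology)"
  unfolding d_star_scott
proof (intro allI impI)
  fix D and x :: 'a and U
  assume H: "directed D \<and> scott_open U \<and> U \<noteq> {} \<and> (\<Inter>d\<in>D. upper {d}) \<inter> upper {x} \<subseteq> U"
  obtain s where s: "is_sup D s" using dc H unfolding dcpo_def by blast
  have cC: "closedin scott_topology (- U)" using H openin_scott_compl[of U] by (simp add: openin_scott_topology)
  moreover have "- U \<noteq> UNIV" using H by auto
  ultimately have cA: "closedin scott_topology (lower (upper {x} \<inter> - U))" using p unfolding P2_def by blast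
  show "\<exists>d\<in>D. upper {d} \<inter> upper {x} \<subseteq> U"
  proof (rule ccontr)
    assume "\<not> ?thesis"
    then have "D \<subseteq> lower (upper {x} \<inter> - U)" unfolding lower_def upper_def by auto
    then have "s \<in> lower (upper {x} \<inter> - U)" using cA H s unfolding closedin_scott by blast
    then obtain y where "s \<le> y" "x \<le> y" "y \<notin> U" unfolding lower_def upper_def by auto
    then show False using H Inter_upper[OF s] unfolding upper_def by auto
  qed
qed

lemma P3_imp_P2: "P3 TYPE('a::order) \<Longrightarrow> P2 TYPE('a)"
  unfolding P2_def P3_def using upper_single_KX by blast

lemma P2_imp_P3:
  assumes dc: "dcpo TYPE('a::order)" and p: "P2 TYPE('a)"
  shows "P3 TYPE('a)"
  unfolding P3_def
proof (intro allI impI)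
  fix K :: "'a set" and C :: "'a set" assume H: "K \<in> KX scott_topology \<and> closedin scott_topology C \<and> C \<noteq> UNIV"
  let ?A = "lower (K \<inter> C)"
  show "closedin scott_topology ?A"
    unfolding closedin_scott
  proof (intro conjI allI impI)
    fix a b assume "a \<in> ?A \<and> b \<le> a" then show "b \<in> ?A" using lower_closed_lower by blast
  next
    fix D s assume Ds: "directed D \<and> D \<subseteq> ?A \<and> is_sup D s"
    show "s \<in> ?A"
    proof (rule ccontr)
      assume ns: "s \<notin> ?A"
      define W where "W d = - lower (upper {d} \<inter> C)" for d
      have Wo: "openin scott_topology (W d)" for d
        using p H unfolding P2_def W_def by (simp add: openin_scott_compl)
      have cov: "K \<subseteq> \<Union> (W ` D)"
      proof
        fix k assume k: "k \<in> K"
        have cB: "closedin scott_topology (lower (upper {k} \<inter> C))" using p H unfolding P2_def by blast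
        have "s \<notin> lower (upper {k} \<inter> C)"
        proof
          assume "s \<in> lower (upper {k} \<inter> C)"
          then obtain y where "s \<le> y" "k \<le> y" "y \<in> C" unfolding lower_def upper_def by auto
          then have "y \<in> K" using KX_upper H k by blast
          then show False using ns \<open>s \<le> y\<close> \<open>y \<in> C\<close> unfolding lower_def by auto
        qed
        then have "\<not> D \<subseteq> lower (upper {k} \<inter> C)" using cB Ds unfolding closedin_scott by blast
        then obtain d where d: "d \<in> D" "d \<notin> lower (upper {k} \<inter> C)" by auto
        have "k \<in> W d"
        proof -
          { assume "k \<in> lower (upper {d} \<inter> C)"
            then obtain y where "k \<le> y" "d \<le> y" "y \<in> C" unfolding lower_def upper_def by auto
            then have False using d unfolding lower_def upper_def by auto }
          then show ?thesis unfolding W_def by auto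
        qed
        then show "k \<in> \<Union> (W ` D)" using d by auto
      qed
      have "compactin scott_topology K" using H unfolding KX_def by auto
      then obtain \<F> where F: "finite \<F>" "\<F> \<subseteq> W ` D" "K \<subseteq> \<Union>\<F>"
        using cov Wo unfolding compactin_def by (metis imageE)
      then obtain F0 where F0: "F0 \<subseteq> D" "finite F0" "\<F> = W ` F0"
        by (meson finite_subset_image)
      obtain d0 where d0: "d0 \<in> D" "\<forall>f\<in>F0. f \<le> d0" using directed_finite_ub[of D F0] Ds F0 by auto
      have mono: "W f \<subseteq> W d0" if "f \<le> d0" for f
        using that unfolding W_def lower_def upper_def by (auto intro: order_trans)
      have "K \<subseteq> W d0" using F F0 d0 mono by blast
      moreover have "d0 \<in> ?A" using Ds d0 by auto
      then obtain y where y: "d0 \<le> y" "y \<in> K" "y \<in> C" unfolding lower_def by auto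
      moreover have "y \<notin> W d0" using y unfolding W_def lower_def upper_def by auto
      ultimately show False by auto
    qed
  qed
qed

lemma S_imp_d:
  assumes s: "S_star_well_filtered (scott_topology :: 'a::order topology)"
  shows "d_star_space (scott_topology :: 'a topology)"
  unfolding d_star_space_def sup_X_scott directed_in_scott
proof (intro allI impI)
  fix D and x :: 'a and U
  assume H: "directed D \<and> x \<in> topspace scott_topology \<and> openin scott_topology U \<and> U \<noteq> {} \<and>
        (\<Inter>d\<in>D. upper {d}) \<inter> upper {x} \<subseteq> U"
  then have dD: "directed D" and oU: "openin scott_topology U" and ne: "U \<noteq> {}"
    and sub: "(\<Inter>d\<in>D. upper {d}) \<inter> upper {x} \<subseteq> U" by blast+
  let ?K = "(\<lambda>d. upper {d}) ` D"
  have KK: "?K \<subseteq> KX scott_topology" using upper_single_KX by blast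
  have filt: "filtered_family ?K"
    unfolding filtered_family_def
  proof (intro conjI ballI)
    show "?K \<noteq> {}" using dD unfolding directed_def by blast
  next
    fix K1 K2 assume "K1 \<in> ?K" "K2 \<in> ?K"
    then obtain a b where ab: "a \<in> D" "b \<in> D" "K1 = upper {a}" "K2 = upper {b}" by blast
    then obtain c where c: "c \<in> D" "a \<le> c" "b \<le> c" using dD unfolding directed_def by blast
    have "upper {c} \<subseteq> K1" "upper {c} \<subseteq> K2" using ab c unfolding upper_def by (auto intro: order_trans)
    then show "\<exists>K3\<in>?K. K3 \<subseteq> K1 \<and> K3 \<subseteq> K2" using c by blast
  qed
  note allS = s[unfolded S_star_well_filtered_def]
  have imp: "?K \<subseteq> KX scott_topology \<and> filtered_family ?K \<and> upper {x} \<in> KX scott_topology \<and> openin scott_topology U \<and> U \<noteq> {} \<and>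
        \<Inter>?K \<inter> upper {x} \<subseteq> U \<longrightarrow> (\<exists>K\<in>?K. K \<inter> upper {x} \<subseteq> U)"
    using spec[OF spec[OF spec[OF allS, of ?K], of "upper {x}"], of U] .
  have cnj: "?K \<subseteq> KX scott_topology \<and> filtered_family ?K \<and> upper {x} \<in> KX scott_topology \<and> openin scott_topology U \<and> U \<noteq> {} \<and>
        \<Inter>?K \<inter> upper {x} \<subseteq> U"
    by (intro conjI KK filt upper_single_KX oU ne sub)
  have "\<exists>K\<in>?K. K \<inter> upper {x} \<subseteq> U" using mp[OF imp cnj] .
  then show "\<exists>d\<in>D. upper {d} \<inter> upper {x} \<subseteq> U" by blast
qed


lemma minimal_closed:
  fixes \<K> :: "'a::order set set" and A :: "'a set"
  assumes KK: "\<forall>K\<in>\<K>. compactin scott_topology K"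
    and cA: "closedin scott_topology A" and mA: "\<forall>K\<in>\<K>. A \<inter> K \<noteq> {}"
  shows "\<exists>F. closedin scott_topology F \<and> F \<subseteq> A \<and> (\<forall>K\<in>\<K>. F \<inter> K \<noteq> {}) \<and>
           (\<forall>B. closedin scott_topology B \<and> B \<subseteq> F \<and> (\<forall>K\<in>\<K>. B \<inter> K \<noteq> {}) \<longrightarrow> B = F)"
proof -
  define \<B> where "\<B> = {B. closedin (scott_topology :: 'a topology) B \<and> B \<subseteq> A \<and> (\<forall>K\<in>\<K>. B \<inter> K \<noteq> {})}"
  define \<A> where "\<A> = uminus ` \<B>"
  have AB: "A \<in> \<B>" using cA mA unfolding \<B>_def by auto
  have "\<exists>M\<in>\<A>. \<forall>X\<in>\<A>. M \<subseteq> X \<longrightarrow> X = M"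
  proof (rule subset_Zorn_nonempty)
    show "\<A> \<noteq> {}" using AB unfolding \<A>_def by auto
  next
    fix \<C> assume Cne: "\<C> \<noteq> {}" and ch: "subset.chain \<A> \<C>"
    define \<D> where "\<D> = uminus ` \<C>"
    have DB: "\<D> \<subseteq> \<B>" using ch unfolding \<D>_def \<A>_def subset_chain_def by auto
    have Dne: "\<D> \<noteq> {}" using Cne unfolding \<D>_def by auto
    have Dch: "subset.chain UNIV \<D>"
      using ch unfolding \<D>_def subset_chain_def by (auto simp: Compl_subset_Compl_iff)
    have eq: "\<Union>\<C> = - \<Inter>\<D>" unfolding \<D>_def by auto
    have "\<Inter>\<D> \<in> \<B>"
      unfolding \<B>_def
    proof (intro CollectI conjI ballI)
      show "closedin scott_topology (\<Inter>\<D>)" using DB Dne unfolding \<B>_def by (intro closedin_Inter) auto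
      show "\<Inter>\<D> \<subseteq> A" using DB Dne unfolding \<B>_def by auto
    next
      fix K assume K: "K \<in> \<K>"
      have cK: "compactin scott_topology K" using KK K by auto
      have "K \<inter> \<Inter>\<D> \<noteq> {}"
        using cK unfolding compactin_fip
      proof (elim conjE allE impE)
        show "(\<forall>C\<in>\<D>. closedin scott_topology C) \<and> (\<forall>\<F>. finite \<F> \<and> \<F> \<subseteq> \<D> \<longrightarrow> K \<inter> \<Inter>\<F> \<noteq> {})"
        proof (intro conjI allI impI ballI)
          fix C assume "C \<in> \<D>" then show "closedin scott_topology C" using DB unfolding \<B>_def by auto
        next
          fix \<F> assume F: "finite \<F> \<and> \<F> \<subseteq> \<D>"
          show "K \<inter> \<Inter>\<F> \<noteq> {}"
          proof (cases "\<F> = {}")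
            case True
            obtain B where "B \<in> \<D>" using Dne by auto
            then have "B \<inter> K \<noteq> {}" using DB K unfolding \<B>_def by auto
            then show ?thesis using True by auto
          next
            case False
            have "subset.chain UNIV \<F>" using Dch F unfolding subset_chain_def by auto
            then have "\<Inter>\<F> \<in> \<F>" using Inter_in_chain F False by blast
            then have "\<Inter>\<F> \<inter> K \<noteq> {}" using F DB K unfolding \<B>_def by blast
            then show ?thesis by auto
          qed
        qed
      qed
      then show "\<Inter>\<D> \<inter> K \<noteq> {}" by auto
    qed
    then show "\<Union>\<C> \<in> \<A>" unfolding eq \<A>_def by auto
  qed
  then obtain M where M: "M \<in> \<A>" "\<forall>X\<in>\<A>. M \<subseteq> X \<longrightarrow> X = M" by blast
  define F where "F = - M"
  have FB: "F \<in> \<B>" using M unfolding F_def \<A>_def by auto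
  have "\<forall>B. closedin scott_topology B \<and> B \<subseteq> F \<and> (\<forall>K\<in>\<K>. B \<inter> K \<noteq> {}) \<longrightarrow> B = F"
  proof (intro allI impI)
    fix B assume B: "closedin scott_topology B \<and> B \<subseteq> F \<and> (\<forall>K\<in>\<K>. B \<inter> K \<noteq> {})"
    then have "B \<in> \<B>" using FB unfolding \<B>_def by auto
    then have "- B \<in> \<A>" unfolding \<A>_def by auto
    moreover have "M \<subseteq> - B" using B unfolding F_def by auto
    ultimately have "- B = M" using M by blast
    then show "B = F" unfolding F_def by auto
  qed
  then show ?thesis using FB unfolding \<B>_def by blast
qed


lemma P2D: "P2 TYPE('a::order) \<Longrightarrow> closedin scott_topology C \<Longrightarrow> C \<noteq> UNIV \<Longrightarrow>
    closedin scott_topology (lower (upper {x::'a} \<inter> C))"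
  unfolding P2_def by blast

lemma P3D: "P3 TYPE('a::order) \<Longrightarrow> K \<in> KX scott_topology \<Longrightarrow> closedin scott_topology C \<Longrightarrow> C \<noteq> UNIV \<Longrightarrow>
    closedin scott_topology (lower (K \<inter> (C::'a set)))"
  unfolding P3_def by blast

lemma P23_imp_S:
  assumes dc: "dcpo TYPE('a::order)" and p2: "P2 TYPE('a)" and p3: "P3 TYPE('a)"
  shows "S_star_well_filtered (scott_topology :: 'a topology)"
  unfolding S_star_well_filtered_def
proof (intro allI impI)
  fix \<K> :: "'a set set" and G U
  assume H: "\<K> \<subseteq> KX scott_topology \<and> filtered_family \<K> \<and> G \<in> KX scott_topology \<and>
             openin scott_topology U \<and> U \<noteq> {} \<and> \<Inter>\<K> \<inter> G \<subseteq> U"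
  from H have HK: "\<K> \<subseteq> KX scott_topology" and Hf: "filtered_family \<K>" and HG: "G \<in> KX scott_topology"
    and HU: "openin scott_topology U" and Hne: "U \<noteq> {}" and Hsub: "\<Inter>\<K> \<inter> G \<subseteq> U" by auto
  show "\<exists>K\<in>\<K>. K \<inter> G \<subseteq> U"
  proof (rule ccontr)
    assume nK: "\<not> ?thesis"
    define C where "C = - U"
    have cC: "closedin scott_topology C" using HU openin_scott_compl[of U] unfolding C_def by simp
    have CU: "C \<noteq> UNIV" using Hne unfolding C_def by auto
    have Clow: "y \<le> x \<Longrightarrow> x \<in> C \<Longrightarrow> y \<in> C" for x y using cC unfolding closedin_scott by blast
    define A where "A = lower (G \<inter> C)"
    have cA: "closedin scott_topology A" unfolding A_def by (rule P3D[OF p3 HG cC CU])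
    have AC: "A \<subseteq> C"
    proof
      fix y assume "y \<in> A"
      then obtain a where "a \<in> C" "y \<le> a" unfolding A_def lower_def by blast
      then show "y \<in> C" using Clow[of y a] by simp
    qed
    have mA: "\<forall>K\<in>\<K>. A \<inter> K \<noteq> {}"
    proof
      fix K assume "K \<in> \<K>"
      then have "\<not> K \<inter> G \<subseteq> U" using nK by blast
      then obtain y where y: "y \<in> K" "y \<in> G" "y \<notin> U" by blast
      then have "y \<in> G \<inter> C" unfolding C_def by simp
      then have "y \<in> A" unfolding A_def lower_def by blast
      then have "y \<in> A \<inter> K" using y by simp
      then show "A \<inter> K \<noteq> {}" by auto
    qed
    have KK: "\<forall>K\<in>\<K>. compactin scott_topology K" using HK unfolding KX_def by auto
    obtain F where FF: "closedin scott_topology F \<and> F \<subseteq> A \<and> (\<forall>K\<in>\<K>. F \<inter> K \<noteq> {}) \<and>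
           (\<forall>B. closedin scott_topology B \<and> B \<subseteq> F \<and> (\<forall>K\<in>\<K>. B \<inter> K \<noteq> {}) \<longrightarrow> B = F)"
      using minimal_closed[OF KK cA mA] by (rule exE)
    note F = conjunct1[OF FF] conjunct1[OF conjunct2[OF FF]] conjunct1[OF conjunct2[OF conjunct2[OF FF]]]
    note Fmin0 = conjunct2[OF conjunct2[OF conjunct2[OF FF]]]
    have Fmin: "B = F" if "closedin scott_topology B" "B \<subseteq> F" "\<forall>K\<in>\<K>. B \<inter> K \<noteq> {}" for B
      using Fmin0 that by simp
    have FU: "F \<noteq> UNIV" using F AC CU by auto
    have Flow: "y \<le> x \<Longrightarrow> x \<in> F \<Longrightarrow> y \<in> F" for x y using F(1) unfolding closedin_scott by blast
    have filt: "\<And>K1 K2. K1 \<in> \<K> \<Longrightarrow> K2 \<in> \<K> \<Longrightarrow> \<exists>K3\<in>\<K>. K3 \<subseteq> K1 \<and> K3 \<subseteq> K2"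
      using Hf unfolding filtered_family_def by blast
    have claim1: "F \<subseteq> lower (K \<inter> F)" if K: "K \<in> \<K>" for K
    proof -
      have KX: "K \<in> KX scott_topology" using HK K by auto
      have c: "closedin scott_topology (lower (K \<inter> F))" by (rule P3D[OF p3 KX F(1) FU])
      have s: "lower (K \<inter> F) \<subseteq> F"
      proof
        fix y assume "y \<in> lower (K \<inter> F)"
        then obtain a where "a \<in> F" "y \<le> a" unfolding lower_def by blast
        then show "y \<in> F" using Flow[of y a] by simp
      qed
      have m: "\<forall>K'\<in>\<K>. lower (K \<inter> F) \<inter> K' \<noteq> {}"
      proof
        fix K' assume K': "K' \<in> \<K>"
        obtain K'' where K'': "K'' \<in> \<K>" "K'' \<subseteq> K" "K'' \<subseteq> K'" using filt[OF K K'] by blast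
        then obtain z where "z \<in> F" "z \<in> K''" using F(3) by blast
        then have "z \<in> lower (K \<inter> F) \<inter> K'" using K'' unfolding lower_def by auto
        then show "lower (K \<inter> F) \<inter> K' \<noteq> {}" by auto
      qed
      show ?thesis using Fmin[OF c s m] by simp
    qed
    have claim2: "F \<subseteq> lower (upper {a} \<inter> F)" if a: "a \<in> F" for a
    proof -
      have c: "closedin scott_topology (lower (upper {a} \<inter> F))" by (rule P2D[OF p2 F(1) FU])
      have s: "lower (upper {a} \<inter> F) \<subseteq> F"
      proof
        fix y assume "y \<in> lower (upper {a} \<inter> F)"
        then obtain b where "b \<in> F" "y \<le> b" unfolding lower_def by blast
        then show "y \<in> F" using Flow[of y b] by simp
      qed
      have m: "\<forall>K\<in>\<K>. lower (upper {a} \<inter> F) \<inter> K \<noteq> {}"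
      proof
        fix K assume K: "K \<in> \<K>"
        then have "a \<in> lower (K \<inter> F)" using claim1 a by auto
        then obtain k where "a \<le> k" "k \<in> K" "k \<in> F" unfolding lower_def by auto
        then have "k \<in> lower (upper {a} \<inter> F) \<inter> K" unfolding lower_def upper_def by auto
        then show "lower (upper {a} \<inter> F) \<inter> K \<noteq> {}" by auto
      qed
      show ?thesis using Fmin[OF c s m] by simp
    qed
    have Kne: "\<K> \<noteq> {}" using Hf unfolding filtered_family_def by auto
    then obtain K0 where "K0 \<in> \<K>" by auto
    then have Fne: "F \<noteq> {}" using F(3) by auto
    have dF: "directed F"
      unfolding directed_def
    proof (intro conjI ballI)
      show "F \<noteq> {}" by (rule Fne)
    next
      fix a b assume "a \<in> F" "b \<in> F"
      then have "b \<in> lower (upper {a} \<inter> F)" using claim2 by auto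
      then obtain z where "b \<le> z" "a \<le> z" "z \<in> F" unfolding lower_def upper_def by auto
      then show "\<exists>c\<in>F. a \<le> c \<and> b \<le> c" by auto
    qed
    obtain s where s: "is_sup F s" using dc dF unfolding dcpo_def by blast
    have "\<forall>D s. directed D \<and> D \<subseteq> F \<and> is_sup D s \<longrightarrow> s \<in> F" using F(1) unfolding closedin_scott by blast
    then have sF: "s \<in> F" using dF s by blast
    have sK: "s \<in> K" if K: "K \<in> \<K>" for K
    proof -
      have "s \<in> lower (K \<inter> F)" using claim1[OF K] sF by auto
      then obtain k where "s \<le> k" "k \<in> K" "k \<in> F" unfolding lower_def by auto
      moreover have "k \<le> s" using s \<open>k \<in> F\<close> unfolding is_sup_def by auto
      ultimately show ?thesis by (metis order_antisym)
    qed
    have "s \<in> A" using sF F(2) by auto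
    then obtain g where g: "s \<le> g" "g \<in> G" "g \<in> C" unfolding A_def lower_def by auto
    have "g \<in> \<Inter>\<K>"
    proof
      fix K assume K: "K \<in> \<K>"
      then have "K \<in> KX scott_topology" using HK by auto
      then show "g \<in> K" using KX_upper[OF _ sK[OF K] g(1)] by blast
    qed
    then have "g \<in> U" using Hsub g by auto
    then show False using g unfolding C_def by auto
  qed
qed

theorem mainTheorem12:
  assumes "dcpo TYPE('a::order)"
  shows "(d_star_space (scott_topology :: 'a topology)
            \<longleftrightarrow> (\<forall>(x::'a) C. closedin scott_topology C \<and> C \<noteq> UNIV
                   \<longrightarrow> closedin scott_topology (lower (upper {x} \<inter> C))))
       \<and> (d_star_space (scott_topology :: 'a topology)
            \<longleftrightarrow> (\<forall>K (C::'a set). K \<in> KX scott_topology \<and> closedin scott_topology C \<and> C \<noteq> UNIV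
                   \<longrightarrow> closedin scott_topology (lower (K \<inter> C))))
       \<and> (d_star_space (scott_topology :: 'a topology)
            \<longleftrightarrow> S_star_well_filtered (scott_topology :: 'a topology))"
proof -
  have e2: "d_star_space (scott_topology :: 'a topology) \<longleftrightarrow> P2 TYPE('a)"
    using d_imp_P2[OF assms] P2_imp_d[OF assms] by blast
  have e3: "P2 TYPE('a) \<longleftrightarrow> P3 TYPE('a)"
    using P2_imp_P3[OF assms] P3_imp_P2 by blast
  have e4: "d_star_space (scott_topology :: 'a topology) \<longleftrightarrow> S_star_well_filtered (scott_topology :: 'a topology)"
    using S_imp_d[of] P23_imp_S[OF assms] e2 e3 by metis
  have e23: "d_star_space (scott_topology :: 'a topology) \<longleftrightarrow> P3 TYPE('a)" using e2 e3 by simp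
  note g1 = e2[unfolded P2_def]
  note g2 = e23[unfolded P3_def]
  show ?thesis by (intro conjI g1 g2 e4)
qed

end
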